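(* Let $I$ be a finite set of players. For each $\nu\in I$ let $X_\nu\subset\mathbb{R}^{n_\nu}$, let $\succeq_\nu$ be a binary relation on $\mathbb{R}^n=\prod_{\nu\in I}\mathbb{R}^{n_\nu}$, and let $K_\nu:X_{-\nu}\rightrightarrows X_\nu$ be a set-valued map, where $X_{-\nu}=\prod_{j\neq\nu}X_j$. Set $X=\prod_{\nu\in I}X_\nu$ and $K(x)=\prod_{\nu\in I}K_\nu(x^{-\nu})$ for $x\in X$. Assume that for each $\nu\in I$: (1) $K_\nu$ has non-empty values; (2) $U^s_\nu(x)$ is open for all $x\in\mathbb{R}^n$. Define $N_0:\mathbb{R}^n\rightrightarrows\mathbb{R}^n$ by $N_0(x)=\prod_{\nu\in I}\big(N_\nu(x)\setminus\{0\}\big)$, where $0$ denotes the zero vector of $\mathbb{R}^{n_\nu}$. If $\hat x\in X$ is a solution of the Stampacchia quasivariational inequality problem associated to $N_0$ and $K$, i.e. $\hat x\in K(\hat x)$ and there exists $\hat x^*\in N_0(\hat x)$ with $\langle \hat x^*,y-\hat x\rangle\ge 0$ for all $y\in K(\hat x)$, then $\hat x$ is a generalized Nash equilibrium.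
   Context: Vectors $x\in\mathbb{R}^n$ are written $x=(x^\nu,x^{-\nu})$ with $x^\nu\in\mathbb{R}^{n_\nu}$ and $x^{-\nu}$ the components of the other players. For $w^{-\nu}$, the induced relation on $\mathbb{R}^{n_\nu}$ is $x^\nu\succeq_{\nu,w^{-\nu}}y^\nu$ iff $(x^\nu,w^{-\nu})\succeq_\nu(y^\nu,w^{-\nu})$, and $\succ_{\nu,w^{-\nu}}$ denotes its asymmetric part ($a\succ b$ iff $a\succeq b$ and not $b\succeq a$). For $x\in\mathbb{R}^n$, $U^s_\nu(x)=\{y^\nu\in\mathbb{R}^{n_\nu}: y^\nu\succ_{\nu,x^{-\nu}}x^\nu\}$. For $A\subset\mathbb{R}^m$ and $z\in\mathbb{R}^m$ (no convexity, closedness or membership $z\in A$ required), the normal cone is $\mathscr{N}_A(z)=\{z^*\in\mathbb{R}^m:\langle z^*,y-z\rangle\le 0\ \forall y\in A\}$ if $A\neq\emptyset$ and $\mathscr{N}_A(z)=\mathbb{R}^m$ if $A=\emptyset$. Then $N_\nu(x)=\mathscr{N}_{U^s_\nu(x)}(x^\nu)\subset\mathbb{R}^{n_\nu}$. A point $\hat x\in K(\hat x)$ is a generalized Nash equilibrium if for each $\nu\in I$ there is no $x^\nu\in K_\nu(\hat x^{-\nu})$ with $x^\nu\succ_{\nu,\hat x^{-\nu}}\hat x^\nu$. *)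

theory Defs
  imports "HOL-Analysis.Analysis"
begin

text \<open>Player nu controls a block
x^nu in R^(n nu), encoded as a function nat => real vanishing at all
indices >= n nu. A strategy profile x in R^n is a function 'i => (nat => real)
all of whose blocks are such. The partial profile x^{-nu} is encoded as the
profile with the nu-block replaced by zero, and (y^nu, w^{-nu}) is w(nu := y).\<close>

type_synonym block = "nat \<Rightarrow> real"
type_synonym 'i profile = "'i \<Rightarrow> block"

definition blk :: "nat \<Rightarrow> block set" where
  "blk d = {v. \<forall>k\<ge>d. v k = 0}"

definition Rn :: "('i \<Rightarrow> nat) \<Rightarrow> 'i profile set" where
  "Rn n = {x. \<forall>\<nu>. x \<nu> \<in> blk (n \<nu>)}"

definition inner_blk :: "nat \<Rightarrow> block \<Rightarrow> block \<Rightarrow> real" where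
  "inner_blk d a b = (\<Sum>k<d. a k * b k)"

definition inner_prof :: "('i::finite \<Rightarrow> nat) \<Rightarrow> 'i profile \<Rightarrow> 'i profile \<Rightarrow> real" where
  "inner_prof n a b = (\<Sum>\<nu>\<in>UNIV. inner_blk (n \<nu>) (a \<nu>) (b \<nu>))"

definition minus :: "'i \<Rightarrow> 'i profile \<Rightarrow> 'i profile" where
  "minus \<nu> x = x(\<nu> := (\<lambda>_. 0))"

definition Xminus :: "('i \<Rightarrow> block set) \<Rightarrow> 'i \<Rightarrow> 'i profile set" where
  "Xminus Xs \<nu> = {w. w \<nu> = (\<lambda>_. 0) \<and> (\<forall>j. j \<noteq> \<nu> \<longrightarrow> w j \<in> Xs j)}"

definition Xprod :: "('i \<Rightarrow> block set) \<Rightarrow> 'i profile set" where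
  "Xprod Xs = {x. \<forall>\<nu>. x \<nu> \<in> Xs \<nu>}"

definition Kmap :: "('i \<Rightarrow> 'i profile \<Rightarrow> block set) \<Rightarrow> 'i profile \<Rightarrow> 'i profile set" where
  "Kmap K x = {y. \<forall>\<nu>. y \<nu> \<in> K \<nu> (minus \<nu> x)}"

definition ind_rel :: "('i profile \<Rightarrow> 'i profile \<Rightarrow> bool) \<Rightarrow> 'i \<Rightarrow> 'i profile \<Rightarrow> block \<Rightarrow> block \<Rightarrow> bool" where
  "ind_rel R \<nu> w a b = R (w(\<nu> := a)) (w(\<nu> := b))"

definition ind_strict :: "('i profile \<Rightarrow> 'i profile \<Rightarrow> bool) \<Rightarrow> 'i \<Rightarrow> 'i profile \<Rightarrow> block \<Rightarrow> block \<Rightarrow> bool" where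
  "ind_strict R \<nu> w a b = (ind_rel R \<nu> w a b \<and> \<not> ind_rel R \<nu> w b a)"

definition Us :: "('i \<Rightarrow> nat) \<Rightarrow> ('i \<Rightarrow> 'i profile \<Rightarrow> 'i profile \<Rightarrow> bool) \<Rightarrow> 'i \<Rightarrow> 'i profile \<Rightarrow> block set" where
  "Us n R \<nu> x = {y \<in> blk (n \<nu>). ind_strict (R \<nu>) \<nu> x y (x \<nu>)}"

definition ncone :: "nat \<Rightarrow> block set \<Rightarrow> block \<Rightarrow> block set" where
  "ncone d A z = (if A = {} then blk d
     else {zs \<in> blk d. \<forall>y\<in>A. inner_blk d zs (\<lambda>k. y k - z k) \<le> 0})"

definition Nnu :: "('i \<Rightarrow> nat) \<Rightarrow> ('i \<Rightarrow> 'i profile \<Rightarrow> 'i profile \<Rightarrow> bool) \<Rightarrow> 'i \<Rightarrow> 'i profile \<Rightarrow> block set" where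
  "Nnu n R \<nu> x = ncone (n \<nu>) (Us n R \<nu> x) (x \<nu>)"

definition N0 :: "('i \<Rightarrow> nat) \<Rightarrow> ('i \<Rightarrow> 'i profile \<Rightarrow> 'i profile \<Rightarrow> bool) \<Rightarrow> 'i profile \<Rightarrow> 'i profile set" where
  "N0 n R x = {xs. \<forall>\<nu>. xs \<nu> \<in> Nnu n R \<nu> x - {(\<lambda>_. 0)}}"

definition SQVI_solution :: "('i::finite \<Rightarrow> nat) \<Rightarrow> ('i profile \<Rightarrow> 'i profile set) \<Rightarrow> ('i profile \<Rightarrow> 'i profile set) \<Rightarrow> 'i profile \<Rightarrow> bool" where
  "SQVI_solution n T Kf xh \<longleftrightarrow> xh \<in> Kf xh \<and>
     (\<exists>xs\<in>T xh. \<forall>y\<in>Kf xh. inner_prof n xs (\<lambda>\<nu> k. y \<nu> k - xh \<nu> k) \<ge> 0)"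

definition is_GNE :: "('i \<Rightarrow> 'i profile \<Rightarrow> 'i profile \<Rightarrow> bool) \<Rightarrow> ('i \<Rightarrow> 'i profile \<Rightarrow> block set) \<Rightarrow> 'i profile \<Rightarrow> bool" where
  "is_GNE R K xh \<longleftrightarrow> xh \<in> Kmap K xh \<and>
     (\<forall>\<nu>. \<not> (\<exists>a \<in> K \<nu> (minus \<nu> xh). ind_strict (R \<nu>) \<nu> xh a (xh \<nu>)))"

end

theory Submission
  imports Defs
begin

lemma inner_blk_self_pos:
  assumes "v \<in> blk d" "v \<noteq> (\<lambda>_. 0)"
  shows "inner_blk d v v > 0"
proof -
  obtain k where k: "v k \<noteq> 0" using assms(2) by auto
  have kd: "k < d"
  proof (rule ccontr)
    assume "\<not> k < d"
    then have "v k = 0" using assms(1) unfolding blk_def by simp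
    with k show False by simp
  qed
  have "v k * v k \<le> (\<Sum>j<d. v j * v j)"
    using kd by (intro member_le_sum) auto
  moreover have "v k * v k > 0" using k by (auto simp: zero_less_mult_iff linorder_neq_iff)
  ultimately show ?thesis unfolding inner_blk_def by linarith
qed

lemma inner_blk_shift:
  "inner_blk d v (\<lambda>k. (a k + t * v k) - z k) = inner_blk d v (\<lambda>k. a k - z k) + t * inner_blk d v v"
  proof -
  have "(\<Sum>k<d. v k * (a k + t * v k - z k)) = (\<Sum>k<d. v k * (a k - z k) + t * (v k * v k))"
    by (rule sum.cong) (auto simp: algebra_simps)
  also have "\<dots> = (\<Sum>k<d. v k * (a k - z k)) + t * (\<Sum>k<d. v k * v k)"
    by (simp add: sum.distrib sum_distrib_left)
  finally show ?thesis unfolding inner_blk_def .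
qed

theorem theorem1:
  fixes n :: "'i::finite \<Rightarrow> nat"
    and Xs :: "'i \<Rightarrow> (nat \<Rightarrow> real) set"
    and R :: "'i \<Rightarrow> ('i \<Rightarrow> nat \<Rightarrow> real) \<Rightarrow> ('i \<Rightarrow> nat \<Rightarrow> real) \<Rightarrow> bool"
    and K :: "'i \<Rightarrow> ('i \<Rightarrow> nat \<Rightarrow> real) \<Rightarrow> (nat \<Rightarrow> real) set"
    and xh :: "'i \<Rightarrow> nat \<Rightarrow> real"
  assumes X_sub: "\<And>\<nu>. Xs \<nu> \<subseteq> blk (n \<nu>)"
    and K_maps: "\<And>\<nu> w. w \<in> Xminus Xs \<nu> \<Longrightarrow> K \<nu> w \<subseteq> Xs \<nu>"
    and K_nonempty: "\<And>\<nu> w. w \<in> Xminus Xs \<nu> \<Longrightarrow> K \<nu> w \<noteq> {}"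
    and U_open: "\<And>\<nu> x. x \<in> Rn n \<Longrightarrow> openin (top_of_set (blk (n \<nu>))) (Us n R \<nu> x)"
    and xh_X: "xh \<in> Xprod Xs"
    and sol: "SQVI_solution n (N0 n R) (Kmap K) xh"
  shows "is_GNE R K xh"
proof -
  have xhK: "xh \<in> Kmap K xh" using sol unfolding SQVI_solution_def by blast
  obtain xs where xsN: "xs \<in> N0 n R xh"
    and ineq: "\<And>y. y \<in> Kmap K xh \<Longrightarrow> inner_prof n xs (\<lambda>\<nu> k. y \<nu> k - xh \<nu> k) \<ge> 0"
    using sol unfolding SQVI_solution_def by blast
  have xhR: "xh \<in> Rn n" using xh_X X_sub unfolding Xprod_def Rn_def by blast
  show ?thesis
    unfolding is_GNE_def
  proof (intro conjI xhK allI notI)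
    fix \<nu>
    assume "\<exists>a\<in>K \<nu> (minus \<nu> xh). ind_strict (R \<nu>) \<nu> xh a (xh \<nu>)"
    then obtain a where aK: "a \<in> K \<nu> (minus \<nu> xh)"
      and astr: "ind_strict (R \<nu>) \<nu> xh a (xh \<nu>)" by blast
    define d where "d = n \<nu>"
    define v where "v = xs \<nu>"
    have aB: "a \<in> blk d"
    proof -
      have "minus \<nu> xh \<in> Xminus Xs \<nu>"
        using xh_X unfolding Xminus_def Xprod_def minus_def by auto
      then show ?thesis using K_maps aK X_sub d_def by blast
    qed
    have aU: "a \<in> Us n R \<nu> xh" unfolding Us_def using aB astr d_def by simp
    have vN: "v \<in> Nnu n R \<nu> xh" "v \<noteq> (\<lambda>_. 0)"
      using xsN unfolding N0_def v_def by auto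
    have UN: "Us n R \<nu> xh \<noteq> {}" using aU by blast
    have vmem: "v \<in> {zs \<in> blk d. \<forall>y\<in>Us n R \<nu> xh. inner_blk d zs (\<lambda>k. y k - xh \<nu> k) \<le> 0}"
      using vN(1) unfolding Nnu_def ncone_def d_def if_not_P[OF UN] .
    then have vB: "v \<in> blk d" by blast
    have vcone: "\<And>y. y \<in> Us n R \<nu> xh \<Longrightarrow> inner_blk d v (\<lambda>k. y k - xh \<nu> k) \<le> 0"
      using vmem by blast
    have vpos: "inner_blk d v v > 0" using inner_blk_self_pos[OF vB vN(2)] .
    obtain S where S: "open S" "Us n R \<nu> xh = S \<inter> blk d"
      using U_open[OF xhR, of \<nu>] unfolding openin_open d_def by blast
    define f where "f = (\<lambda>t::real. \<lambda>k. a k + t * v k)"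
    have fc: "continuous_on UNIV f" unfolding f_def
      by (intro continuous_on_coordinatewise_then_product continuous_intros)
    have "open (UNIV \<inter> f -` S)" using continuous_on_open_vimage[of UNIV f] fc S(1) by simp
    moreover have "0 \<in> f -` S" using aU S(2) unfolding f_def by auto
    ultimately obtain e where e: "e > 0" "ball 0 e \<subseteq> f -` S"
      by (metis Int_UNIV_left open_contains_ball)
    define t where "t = e / 2"
    have tb: "t \<in> ball 0 e" using e unfolding t_def by (simp add: dist_norm)
    have t1: "t > 0" using e(1) by (simp add: t_def)
    have t2: "f t \<in> S" using e(2) tb by blast
    note t = t1 t2
    have "f t \<in> blk d" using aB vB unfolding f_def blk_def by auto
    with t S(2) have "f t \<in> Us n R \<nu> xh" by blast
    then have "inner_blk d v (\<lambda>k. f t k - xh \<nu> k) \<le> 0" by (rule vcone)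
    moreover have "inner_blk d v (\<lambda>k. f t k - xh \<nu> k)
        = inner_blk d v (\<lambda>k. a k - xh \<nu> k) + t * inner_blk d v v"
      unfolding f_def by (rule inner_blk_shift)
    moreover have "t * inner_blk d v v > 0" using t(1) vpos by (rule mult_pos_pos)
    ultimately have neg: "inner_blk d v (\<lambda>k. a k - xh \<nu> k) < 0" by linarith
    define y where "y = xh(\<nu> := a)"
    have yK: "y \<in> Kmap K xh" using xhK aK unfolding Kmap_def y_def by auto
    have "inner_prof n xs (\<lambda>\<mu> k. y \<mu> k - xh \<mu> k) = inner_blk d v (\<lambda>k. a k - xh \<nu> k)"
    proof -
      have "inner_prof n xs (\<lambda>\<mu> k. y \<mu> k - xh \<mu> k)
          = (\<Sum>\<mu>\<in>UNIV. if \<mu> = \<nu> then inner_blk d v (\<lambda>k. a k - xh \<nu> k) else 0)"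
        unfolding inner_prof_def
      proof (rule sum.cong)
        fix \<mu> :: 'i
        show "inner_blk (n \<mu>) (xs \<mu>) (\<lambda>k. y \<mu> k - xh \<mu> k) =
          (if \<mu> = \<nu> then inner_blk d v (\<lambda>k. a k - xh \<nu> k) else 0)"
        proof (cases "\<mu> = \<nu>")
          case True
          then show ?thesis by (simp add: y_def d_def v_def)
        next
          case False
          then show ?thesis by (simp add: y_def inner_blk_def)
        qed
      qed simp
      also have "\<dots> = inner_blk d v (\<lambda>k. a k - xh \<nu> k)" by simp
      finally show ?thesis .
    qed
    with ineq[OF yK] neg show False by linarith
  qed
qed

end
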